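(* Let $\mathsf{K}>0$ and let $\omega_{\Delta^n}=\sqrt{-1}\sum_{\alpha=1}^n\frac{2}{\mathsf{K}(1-|z^\alpha|^2)^2}dz^\alpha\wedge dz^{\bar\alpha}$ be the complete Kähler-Einstein metric of the polydisc $\Delta^n=\{z\in\mathbb{C}^n:|z^\alpha|<1,\ \alpha=1,\dots,n\}$ with Ricci curvature $-\mathsf{K}$. If $\varphi$ is a local potential of $\omega_{\Delta^n}$ with constant gradient length, then $|\partial\varphi|_{\omega_{\Delta^n}}^2\equiv 2n/\mathsf{K}$.
   Context: Conventions: $dd^c=\sqrt{-1}\partial\bar\partial$; a local potential satisfies $dd^c\varphi=\omega_{\Delta^n}$ on an open subset; $|\partial\varphi|_\omega^2=g^{\alpha\bar\beta}\varphi_\alpha\varphi_{\bar\beta}$ where $\omega=\sqrt{-1}g_{\alpha\bar\beta}dz^\alpha\wedge dz^{\bar\beta}$. *)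

theory Defs
  imports "HOL-Analysis.Analysis"
begin

text \<open>Points of C^n are vectors  z :: complex ^ 'n  (n = CARD('n)).
  Real-differentiability is Frechet differentiability over the reals.\<close>

fun Ck_on :: "nat \<Rightarrow> ('a::real_normed_vector \<Rightarrow> 'b::real_normed_vector) \<Rightarrow> 'a set \<Rightarrow> bool" where
  "Ck_on 0 f U = continuous_on U f"
| "Ck_on (Suc k) f U =
     ((\<forall>z\<in>U. f differentiable (at z)) \<and>
      (\<forall>v. Ck_on k (\<lambda>z. frechet_derivative f (at z) v) U))"

definition smooth_on_set :: "('a::real_normed_vector \<Rightarrow> 'b::real_normed_vector) \<Rightarrow> 'a set \<Rightarrow> bool" where
  "smooth_on_set f U \<longleftrightarrow> (\<forall>k. Ck_on k f U)"

text \<open>Wirtinger derivatives  d/dz^a = (d/dx^a - i d/dy^a)/2  and  d/dzbar^a = (d/dx^a + i d/dy^a)/2.\<close>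
definition wirt_dz :: "(complex ^ 'n \<Rightarrow> complex) \<Rightarrow> complex ^ 'n \<Rightarrow> 'n \<Rightarrow> complex" where
  "wirt_dz f z a = (frechet_derivative f (at z) (axis a 1)
                    - \<i> * frechet_derivative f (at z) (axis a \<i>)) / 2"

definition wirt_dzbar :: "(complex ^ 'n \<Rightarrow> complex) \<Rightarrow> complex ^ 'n \<Rightarrow> 'n \<Rightarrow> complex" where
  "wirt_dzbar f z a = (frechet_derivative f (at z) (axis a 1)
                    + \<i> * frechet_derivative f (at z) (axis a \<i>)) / 2"

definition polydisc :: "(complex ^ 'n) set" where
  "polydisc = {z. \<forall>a. cmod (z $ a) < 1}"

definition pd_metric :: "real \<Rightarrow> complex ^ 'n \<Rightarrow> 'n \<Rightarrow> 'n \<Rightarrow> real" where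
  "pd_metric K z a b = (if a = b then 2 / (K * (1 - (cmod (z $ a))\<^sup>2)\<^sup>2) else 0)"

text \<open>phi is a local potential of omega on U: phi smooth real-valued on the open set U
  and dd^c phi = omega, i.e. d^2 phi / dz^a dzbar^b = g_{a bbar}.\<close>
definition local_potential :: "real \<Rightarrow> (complex ^ 'n \<Rightarrow> real) \<Rightarrow> (complex ^ 'n) set \<Rightarrow> bool" where
  "local_potential K \<phi> U \<longleftrightarrow>
     open U \<and> U \<subseteq> polydisc \<and> smooth_on_set \<phi> U \<and>
     (\<forall>z\<in>U. \<forall>a b. wirt_dzbar (\<lambda>w. wirt_dz (\<lambda>u. complex_of_real (\<phi> u)) w a) z b
                    = complex_of_real (pd_metric K z a b))"

text \<open>|d phi|^2_omega = sum_{a,b} g^{a bbar} phi_a phi_bbar; g is diagonal, so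
  g^{a abar} = 1/g_{a abar} and phi_abar = conj(phi_a) for real phi.\<close>
definition grad_len_sq :: "real \<Rightarrow> (complex ^ 'n \<Rightarrow> real) \<Rightarrow> complex ^ 'n \<Rightarrow> real" where
  "grad_len_sq K \<phi> z =
     (\<Sum>a\<in>UNIV. (cmod (wirt_dz (\<lambda>u. complex_of_real (\<phi> u)) z a))\<^sup>2 / pd_metric K z a a)"

end

theory Submission
  imports Defs
begin

abbreviation DD :: "('a::real_normed_vector \<Rightarrow> 'b::real_normed_vector) \<Rightarrow> 'a \<Rightarrow> 'a \<Rightarrow> 'b" where
  "DD f z v \<equiv> frechet_derivative f (at z) v"

lemma Ck_on_cong:
  assumes "open U" "\<And>z. z \<in> U \<Longrightarrow> f z = g z" "Ck_on k f U"
  shows "Ck_on k g U"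
  using assms
proof (induction k arbitrary: f g)
  case 0
  then show ?case using continuous_on_cong by force
next
  case (Suc k)
  have dg: "\<forall>z\<in>U. g differentiable (at z)"
  proof
    fix z assume z: "z \<in> U"
    then have "(f has_derivative frechet_derivative f (at z)) (at z)"
      using Suc.prems by (auto simp: frechet_derivative_works)
    then have "(g has_derivative frechet_derivative f (at z)) (at z)"
      by (rule has_derivative_transform_within_open[OF _ \<open>open U\<close> z]) (use Suc.prems in auto)
    then show "g differentiable (at z)" by (auto simp: differentiable_def)
  qed
  have eq: "\<And>z. z \<in> U \<Longrightarrow> frechet_derivative f (at z) = frechet_derivative g (at z)"
    by (rule frechet_derivative_transform_within_open[OF _ \<open>open U\<close>]) (use Suc.prems in auto)
  show ?case unfolding Ck_on.simps
  proof (intro conjI allI)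
    show "\<forall>z\<in>U. g differentiable (at z)" by (rule dg)
    fix v
    have "Ck_on k (\<lambda>z. DD f z v) U" using Suc.prems(3) by simp
    then show "Ck_on k (\<lambda>z. DD g z v) U"
      using Suc.IH[of "\<lambda>z. DD f z v" "\<lambda>z. DD g z v"] eq \<open>open U\<close> by auto
  qed
qed

lemma Ck_on_linear:
  assumes "open U" "bounded_linear L" "Ck_on k f U"
  shows "Ck_on k (\<lambda>z. L (f z)) U"
  using assms(3)
proof (induction k arbitrary: f)
  case 0
  then show ?case using assms(2) by (auto intro: continuous_on_compose2[OF linear_continuous_on] )
next
  case (Suc k)
  have der: "\<And>z. z \<in> U \<Longrightarrow> ((\<lambda>z. L (f z)) has_derivative (\<lambda>h. L (frechet_derivative f (at z) h))) (at z)"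
    using Suc.prems by (auto intro!: bounded_linear.has_derivative[OF assms(2)] simp: frechet_derivative_works)
  then have eq: "\<And>z v. z \<in> U \<Longrightarrow> L (frechet_derivative f (at z) v) = frechet_derivative (\<lambda>z. L (f z)) (at z) v"
    by (metis frechet_derivative_at)
  show ?case unfolding Ck_on.simps
  proof (intro conjI allI)
    show "\<forall>z\<in>U. (\<lambda>z. L (f z)) differentiable (at z)" using der by (auto simp: differentiable_def)
    fix v
    have "Ck_on k (\<lambda>z. L (DD f z v)) U" using Suc.prems Suc.IH by simp
    then show "Ck_on k (\<lambda>z. DD (\<lambda>z. L (f z)) z v) U"
      by (rule Ck_on_cong[OF \<open>open U\<close>, rotated]) (rule eq)
  qed
qed

lemma Ck_on_add:
  assumes "open U" "Ck_on k f U" "Ck_on k g U"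
  shows "Ck_on k (\<lambda>z. f z + g z) U"
  using assms(2,3)
proof (induction k arbitrary: f g)
  case 0
  then show ?case by (auto intro: continuous_on_add)
next
  case (Suc k)
  have der: "\<And>z. z \<in> U \<Longrightarrow> ((\<lambda>z. f z + g z) has_derivative (\<lambda>h. frechet_derivative f (at z) h + frechet_derivative g (at z) h)) (at z)"
    using Suc.prems by (auto intro!: has_derivative_add simp: frechet_derivative_works)
  then have eq: "\<And>z v. z \<in> U \<Longrightarrow> frechet_derivative f (at z) v + frechet_derivative g (at z) v = frechet_derivative (\<lambda>z. f z + g z) (at z) v"
    by (metis frechet_derivative_at)
  show ?case unfolding Ck_on.simps
  proof (intro conjI allI)
    show "\<forall>z\<in>U. (\<lambda>z. f z + g z) differentiable (at z)" using der by (auto simp: differentiable_def)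
    fix v
    have "Ck_on k (\<lambda>z. DD f z v + DD g z v) U" using Suc.prems Suc.IH by simp
    then show "Ck_on k (\<lambda>z. DD (\<lambda>z. f z + g z) z v) U"
      by (rule Ck_on_cong[OF \<open>open U\<close>, rotated]) (rule eq)
  qed
qed

lemma line_deriv:
  fixes \<psi> :: "'a::real_normed_vector \<Rightarrow> real"
  assumes "\<psi> differentiable (at (p + t *\<^sub>R v))"
  shows "((\<lambda>s. \<psi> (p + s *\<^sub>R v)) has_real_derivative DD \<psi> (p + t *\<^sub>R v) v) (at t)"
proof -
  have 1: "((\<lambda>s. p + s *\<^sub>R v) has_derivative (\<lambda>s. s *\<^sub>R v)) (at t)"
    by (auto intro!: derivative_eq_intros)
  have 2: "(\<psi> has_derivative DD \<psi> (p + t *\<^sub>R v)) (at (p + t *\<^sub>R v))"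
    using assms frechet_derivative_works by blast
  have 3: "((\<lambda>s. \<psi> (p + s *\<^sub>R v)) has_derivative (\<lambda>s. DD \<psi> (p + t *\<^sub>R v) (s *\<^sub>R v))) (at t)"
    using has_derivative_compose[OF 1 2] by simp
  have lin: "linear (DD \<psi> (p + t *\<^sub>R v))" using has_derivative_linear[OF 2] .
  have "(\<lambda>s. DD \<psi> (p + t *\<^sub>R v) (s *\<^sub>R v)) = (*) (DD \<psi> (p + t *\<^sub>R v) v)"
    using linear_cmul[OF lin] by (auto simp: fun_eq_iff mult.commute)
  then show ?thesis unfolding has_field_derivative_def using 3 by simp
qed

lemma D2_sym:
  fixes \<psi> :: "'a::real_normed_vector \<Rightarrow> real"
  assumes U: "open U" "z \<in> U" and C: "Ck_on 2 \<psi> U"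
  shows "DD (\<lambda>w. DD \<psi> w v) z u = DD (\<lambda>w. DD \<psi> w u) z v"
proof -
  define G1 where "G1 x = DD (\<lambda>w. DD \<psi> w v) x u" for x
  define G2 where "G2 x = DD (\<lambda>w. DD \<psi> w u) x v" for x
  have C': "\<forall>z\<in>U. \<psi> differentiable (at z)"
    "\<And>v. \<forall>z\<in>U. (\<lambda>z. DD \<psi> z v) differentiable (at z)"
    "\<And>v u. continuous_on U (\<lambda>z. DD (\<lambda>z. DD \<psi> z v) z u)"
    using C by (auto simp: numeral_2_eq_2)
  obtain r where r: "r > 0" "ball z r \<subseteq> U" using U openE by blast
  define m where "m = norm v + norm u + 1"
  have m: "m > 0" unfolding m_def by (simp add: add_nonneg_pos)
  define S where "S s t = z + s *\<^sub>R v + t *\<^sub>R u" for s t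
  have key: "\<exists>x1 x2. dist x1 z \<le> h * m \<and> dist x2 z \<le> h * m \<and> G1 x1 = G2 x2"
    if h: "0 < h" "h * m < r" for h
  proof -
    have inU: "S s t \<in> U" if "0 \<le> s" "s \<le> h" "0 \<le> t" "t \<le> h" for s t
    proof -
      have "norm (s *\<^sub>R v + t *\<^sub>R u) \<le> s * norm v + t * norm u"
        using that by (metis abs_of_nonneg norm_scaleR norm_triangle_le order_refl add_mono)
      also have "\<dots> \<le> h * norm v + h * norm u"
        using that by (intro add_mono mult_right_mono) auto
      also have "\<dots> \<le> h * m" using h unfolding m_def by (simp add: algebra_simps)
      finally have "dist (S s t) z < r" using h unfolding S_def dist_norm by (simp add: algebra_simps)
      then show ?thesis using r by (auto simp: dist_commute)
    qed
    have dS: "dist (S s t) z \<le> h * m" if "0 \<le> s" "s \<le> h" "0 \<le> t" "t \<le> h" for s t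
    proof -
      have "norm (s *\<^sub>R v + t *\<^sub>R u) \<le> s * norm v + t * norm u"
        using that by (metis abs_of_nonneg norm_scaleR norm_triangle_le order_refl add_mono)
      also have "\<dots> \<le> h * norm v + h * norm u"
        using that by (intro add_mono mult_right_mono) auto
      also have "\<dots> \<le> h * m" using h unfolding m_def by (simp add: algebra_simps)
      finally show ?thesis unfolding S_def dist_norm by (simp add: algebra_simps)
    qed
    define Q where "Q = \<psi> (S h h) - \<psi> (S h 0) - \<psi> (S 0 h) + \<psi> (S 0 0)"
    have "\<exists>\<sigma>. 0 < \<sigma> \<and> \<sigma> < h \<and>
       (\<lambda>s. \<psi> ((z + h *\<^sub>R u) + s *\<^sub>R v) - \<psi> (z + s *\<^sub>R v)) h - (\<lambda>s. \<psi> ((z + h *\<^sub>R u) + s *\<^sub>R v) - \<psi> (z + s *\<^sub>R v)) 0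
       = (h - 0) * (DD \<psi> ((z + h *\<^sub>R u) + \<sigma> *\<^sub>R v) v - DD \<psi> (z + \<sigma> *\<^sub>R v) v)"
    proof (rule MVT2[OF h(1)])
      fix s assume s: "0 \<le> s" "s \<le> h"
      have a: "(z + h *\<^sub>R u) + s *\<^sub>R v \<in> U" using inU[of s h] s h unfolding S_def by (simp add: algebra_simps)
      have b: "z + s *\<^sub>R v \<in> U" using inU[of s 0] s h unfolding S_def by simp
      show "((\<lambda>s. \<psi> ((z + h *\<^sub>R u) + s *\<^sub>R v) - \<psi> (z + s *\<^sub>R v)) has_real_derivative
          DD \<psi> ((z + h *\<^sub>R u) + s *\<^sub>R v) v - DD \<psi> (z + s *\<^sub>R v) v) (at s)"
        using a b C'(1) by (intro DERIV_diff line_deriv) auto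
    qed
    then obtain \<sigma> where \<sigma>: "0 < \<sigma>" "\<sigma> < h"
      "Q = h * (DD \<psi> ((z + h *\<^sub>R u) + \<sigma> *\<^sub>R v) v - DD \<psi> (z + \<sigma> *\<^sub>R v) v)"
      unfolding Q_def S_def by (auto simp: algebra_simps)
    have "\<exists>\<tau>. 0 < \<tau> \<and> \<tau> < h \<and>
       (\<lambda>t. DD \<psi> ((z + \<sigma> *\<^sub>R v) + t *\<^sub>R u) v) h - (\<lambda>t. DD \<psi> ((z + \<sigma> *\<^sub>R v) + t *\<^sub>R u) v) 0
       = (h - 0) * DD (\<lambda>w. DD \<psi> w v) ((z + \<sigma> *\<^sub>R v) + \<tau> *\<^sub>R u) u"
    proof (rule MVT2[OF h(1)])
      fix t assume t: "0 \<le> t" "t \<le> h"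
      have a: "(z + \<sigma> *\<^sub>R v) + t *\<^sub>R u \<in> U" using inU[of \<sigma> t] \<sigma> t unfolding S_def by simp
      show "((\<lambda>t. DD \<psi> ((z + \<sigma> *\<^sub>R v) + t *\<^sub>R u) v) has_real_derivative
          DD (\<lambda>w. DD \<psi> w v) ((z + \<sigma> *\<^sub>R v) + t *\<^sub>R u) u) (at t)"
        using a C'(2)[of v] by (intro line_deriv[where \<psi>="\<lambda>w. DD \<psi> w v"]) auto
    qed
    then obtain \<tau> where \<tau>: "0 < \<tau>" "\<tau> < h"
      "Q = h * (h * G1 (S \<sigma> \<tau>))"
      using \<sigma>(3) unfolding S_def G1_def by (auto simp: algebra_simps)
    have "\<exists>\<sigma>. 0 < \<sigma> \<and> \<sigma> < h \<and>
       (\<lambda>s. \<psi> ((z + h *\<^sub>R v) + s *\<^sub>R u) - \<psi> (z + s *\<^sub>R u)) h - (\<lambda>s. \<psi> ((z + h *\<^sub>R v) + s *\<^sub>R u) - \<psi> (z + s *\<^sub>R u)) 0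
       = (h - 0) * (DD \<psi> ((z + h *\<^sub>R v) + \<sigma> *\<^sub>R u) u - DD \<psi> (z + \<sigma> *\<^sub>R u) u)"
    proof (rule MVT2[OF h(1)])
      fix s assume s: "0 \<le> s" "s \<le> h"
      have a: "(z + h *\<^sub>R v) + s *\<^sub>R u \<in> U" using inU[of h s] s h unfolding S_def by (simp add: algebra_simps)
      have b: "z + s *\<^sub>R u \<in> U" using inU[of 0 s] s h unfolding S_def by simp
      show "((\<lambda>s. \<psi> ((z + h *\<^sub>R v) + s *\<^sub>R u) - \<psi> (z + s *\<^sub>R u)) has_real_derivative
          DD \<psi> ((z + h *\<^sub>R v) + s *\<^sub>R u) u - DD \<psi> (z + s *\<^sub>R u) u) (at s)"
        using a b C'(1) by (intro DERIV_diff line_deriv) auto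
    qed
    then obtain \<sigma>' where \<sigma>': "0 < \<sigma>'" "\<sigma>' < h"
      "Q = h * (DD \<psi> ((z + h *\<^sub>R v) + \<sigma>' *\<^sub>R u) u - DD \<psi> (z + \<sigma>' *\<^sub>R u) u)"
      unfolding Q_def S_def by (auto simp: algebra_simps)
    have "\<exists>\<tau>. 0 < \<tau> \<and> \<tau> < h \<and>
       (\<lambda>t. DD \<psi> ((z + \<sigma>' *\<^sub>R u) + t *\<^sub>R v) u) h - (\<lambda>t. DD \<psi> ((z + \<sigma>' *\<^sub>R u) + t *\<^sub>R v) u) 0
       = (h - 0) * DD (\<lambda>w. DD \<psi> w u) ((z + \<sigma>' *\<^sub>R u) + \<tau> *\<^sub>R v) v"
    proof (rule MVT2[OF h(1)])
      fix t assume t: "0 \<le> t" "t \<le> h"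
      have a: "(z + \<sigma>' *\<^sub>R u) + t *\<^sub>R v \<in> U" using inU[of t \<sigma>'] \<sigma>' t unfolding S_def by (simp add: algebra_simps)
      show "((\<lambda>t. DD \<psi> ((z + \<sigma>' *\<^sub>R u) + t *\<^sub>R v) u) has_real_derivative
          DD (\<lambda>w. DD \<psi> w u) ((z + \<sigma>' *\<^sub>R u) + t *\<^sub>R v) v) (at t)"
        using a C'(2)[of u] by (intro line_deriv[where \<psi>="\<lambda>w. DD \<psi> w u"]) auto
    qed
    then obtain \<tau>' where \<tau>': "0 < \<tau>'" "\<tau>' < h"
      "Q = h * (h * G2 (S \<tau>' \<sigma>'))"
      using \<sigma>'(3) unfolding S_def G2_def by (auto simp: algebra_simps)
    have "G1 (S \<sigma> \<tau>) = G2 (S \<tau>' \<sigma>')" using \<tau>(3) \<tau>'(3) h(1) by simp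
    moreover have "dist (S \<sigma> \<tau>) z \<le> h * m" using dS \<sigma> \<tau> by simp
    moreover have "dist (S \<tau>' \<sigma>') z \<le> h * m" using dS \<sigma>' \<tau>' by simp
    ultimately show ?thesis by blast
  qed
  show ?thesis
  proof (rule ccontr)
    assume ne: "DD (\<lambda>w. DD \<psi> w v) z u \<noteq> DD (\<lambda>w. DD \<psi> w u) z v"
    define e where "e = \<bar>G1 z - G2 z\<bar> / 2"
    have e: "e > 0" using ne unfolding e_def G1_def G2_def by simp
    have c1: "continuous_on U G1" "continuous_on U G2" unfolding G1_def G2_def using C'(3) by auto
    obtain d1 where d1: "d1 > 0" "\<forall>x\<in>U. dist x z < d1 \<longrightarrow> dist (G1 x) (G1 z) < e"
      using c1(1) U(2) e unfolding continuous_on_iff by blast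
    obtain d2 where d2: "d2 > 0" "\<forall>x\<in>U. dist x z < d2 \<longrightarrow> dist (G2 x) (G2 z) < e"
      using c1(2) U(2) e unfolding continuous_on_iff by blast
    define h where "h = min r (min d1 d2) / (2 * m)"
    have hpos: "h > 0" unfolding h_def using r d1 d2 m by auto
    have hm: "h * m = min r (min d1 d2) / 2" unfolding h_def using m by (simp add: field_simps)
    have "h * m < r" "h * m < d1" "h * m < d2" unfolding hm using r d1 d2 by auto
    then obtain x1 x2 where x: "dist x1 z \<le> h * m" "dist x2 z \<le> h * m" "G1 x1 = G2 x2"
      using key[OF hpos] by blast
    have x1U: "x1 \<in> U" "x2 \<in> U" using x \<open>h * m < r\<close> r(2) by (auto simp: dist_commute subset_iff)
    have "dist (G1 x1) (G1 z) < e" using d1 x1U x \<open>h * m < d1\<close> by auto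
    moreover have "dist (G2 x2) (G2 z) < e" using d2 x1U x \<open>h * m < d2\<close> by auto
    ultimately have "\<bar>G1 z - G2 z\<bar> < 2 * e" using x(3) unfolding dist_real_def by linarith
    then show False unfolding e_def by simp
  qed
qed

lemma D_linear:
  assumes "G differentiable (at z)" "bounded_linear L"
  shows "DD (\<lambda>x. L (G x)) z v = L (DD G z v)"
proof -
  have "((\<lambda>x. L (G x)) has_derivative (\<lambda>h. L (DD G z h))) (at z)"
    using assms by (auto intro!: bounded_linear.has_derivative[OF assms(2)] simp: frechet_derivative_works)
  then show ?thesis by (metis frechet_derivative_at)
qed

lemma D_add:
  assumes "G differentiable (at z)" "H differentiable (at z)"
  shows "DD (\<lambda>x. G x + H x) z v = DD G z v + DD H z v"
proof -
  have "((\<lambda>x. G x + H x) has_derivative (\<lambda>h. DD G z h + DD H z h)) (at z)"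
    using assms by (auto intro!: has_derivative_add simp: frechet_derivative_works)
  then show ?thesis by (metis frechet_derivative_at)
qed

lemma D_mult:
  fixes G H :: "'a::real_normed_vector \<Rightarrow> complex"
  assumes "G differentiable (at z)" "H differentiable (at z)"
  shows "DD (\<lambda>x. G x * H x) z v = G z * DD H z v + DD G z v * H z"
proof -
  have "((\<lambda>x. G x * H x) has_derivative (\<lambda>h. G z * DD H z h + DD G z h * H z)) (at z)"
    using assms by (auto intro!: has_derivative_mult simp: frechet_derivative_works)
  then show ?thesis by (metis frechet_derivative_at)
qed

lemma D_sum:
  assumes "finite S" "\<And>i. i \<in> S \<Longrightarrow> G i differentiable (at z)"
  shows "DD (\<lambda>x. \<Sum>i\<in>S. G i x) z v = (\<Sum>i\<in>S. DD (G i) z v)"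
proof -
  have "((\<lambda>x. \<Sum>i\<in>S. G i x) has_derivative (\<lambda>h. \<Sum>i\<in>S. DD (G i) z h)) (at z)"
    using assms by (auto intro!: has_derivative_sum simp: frechet_derivative_works)
  then show ?thesis by (metis frechet_derivative_at)
qed

lemma D_const: "DD (\<lambda>x. c) z v = 0" by simp

lemma D_local:
  assumes "G differentiable (at z)" "open U" "z \<in> U" "\<And>x. x \<in> U \<Longrightarrow> G x = H x"
  shows "DD H z v = DD G z v"
  using frechet_derivative_transform_within_open[OF assms] by simp

lemma differentiable_local:
  assumes "G differentiable (at z)" "open U" "z \<in> U" "\<And>x. x \<in> U \<Longrightarrow> G x = H x"
  shows "H differentiable (at z)"
  using assms has_derivative_transform_within_open unfolding differentiable_def by blast

lemma smooth_D: "smooth_on_set G U \<Longrightarrow> smooth_on_set (\<lambda>z. DD G z v) U"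
  unfolding smooth_on_set_def by (metis Ck_on.simps(2))

lemma smooth_diff: "smooth_on_set G U \<Longrightarrow> z \<in> U \<Longrightarrow> G differentiable (at z)"
  unfolding smooth_on_set_def by (metis Ck_on.simps(2))

lemma smooth_Ck: "smooth_on_set G U \<Longrightarrow> Ck_on k G U"
  unfolding smooth_on_set_def by blast

lemma smooth_linear: "open U \<Longrightarrow> bounded_linear L \<Longrightarrow> smooth_on_set G U \<Longrightarrow> smooth_on_set (\<lambda>z. L (G z)) U"
  unfolding smooth_on_set_def using Ck_on_linear by blast

lemma smooth_add: "open U \<Longrightarrow> smooth_on_set G U \<Longrightarrow> smooth_on_set H U \<Longrightarrow> smooth_on_set (\<lambda>z. G z + H z) U"
  unfolding smooth_on_set_def using Ck_on_add by blast

lemma smooth_cong: "open U \<Longrightarrow> (\<And>z. z \<in> U \<Longrightarrow> G z = H z) \<Longrightarrow> smooth_on_set G U \<Longrightarrow> smooth_on_set H U"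
  unfolding smooth_on_set_def using Ck_on_cong by blast

lemma smooth_wirt_dz:
  fixes G :: "complex ^ 'n \<Rightarrow> complex"
  assumes "open U" "smooth_on_set G U"
  shows "smooth_on_set (\<lambda>w. wirt_dz G w a) U"
proof -
  have "smooth_on_set (\<lambda>w. (1/2) * DD G w (axis a 1) + (-\<i>/2) * DD G w (axis a \<i>)) U"
    using assms by (intro smooth_add smooth_linear[OF _ bounded_linear_mult_right] smooth_D) auto
  then show ?thesis
    by (rule smooth_cong[OF assms(1), rotated]) (simp add: wirt_dz_def field_simps)
qed

lemma smooth_wirt_dzbar:
  fixes G :: "complex ^ 'n \<Rightarrow> complex"
  assumes "open U" "smooth_on_set G U"
  shows "smooth_on_set (\<lambda>w. wirt_dzbar G w a) U"
proof -
  have "smooth_on_set (\<lambda>w. (1/2) * DD G w (axis a 1) + (\<i>/2) * DD G w (axis a \<i>)) U"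
    using assms by (intro smooth_add smooth_linear[OF _ bounded_linear_mult_right] smooth_D) auto
  then show ?thesis
    by (rule smooth_cong[OF assms(1), rotated]) (simp add: wirt_dzbar_def field_simps)
qed

lemma D2_sym_complex:
  fixes G :: "'a::real_normed_vector \<Rightarrow> complex"
  assumes U: "open U" "z \<in> U" and S: "smooth_on_set G U"
  shows "DD (\<lambda>w. DD G w v) z u = DD (\<lambda>w. DD G w u) z v"
proof -
  have part: "DD (\<lambda>w. DD (\<lambda>x. L (G x)) w v) z u = L (DD (\<lambda>w. DD G w v) z u)"
    if L: "bounded_linear L" for L :: "complex \<Rightarrow> real" and v u
  proof -
    have d1: "(\<lambda>w. DD G w v) differentiable (at z)" using smooth_diff[OF smooth_D[OF S] U(2)] .
    have d2: "(\<lambda>w. L (DD G w v)) differentiable (at z)"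
    proof -
      obtain D where "((\<lambda>w. DD G w v) has_derivative D) (at z)" using d1 unfolding differentiable_def by blast
      from bounded_linear.has_derivative[OF L this] show ?thesis unfolding differentiable_def by blast
    qed
    have "DD (\<lambda>w. DD (\<lambda>x. L (G x)) w v) z u = DD (\<lambda>w. L (DD G w v)) z u"
      by (rule D_local[OF d2 U(1) U(2)]) (use L in \<open>auto intro!: D_linear[symmetric] smooth_diff[OF S]\<close>)
    also have "\<dots> = L (DD (\<lambda>w. DD G w v) z u)" by (rule D_linear[OF d1 L])
    finally show ?thesis .
  qed
  have sR: "Ck_on 2 (\<lambda>x. Re (G x)) U" "Ck_on 2 (\<lambda>x. Im (G x)) U"
    using smooth_linear[OF U(1) bounded_linear_Re S] smooth_linear[OF U(1) bounded_linear_Im S]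
    by (auto intro: smooth_Ck)
  show ?thesis
    using D2_sym[OF U sR(1), of v u] D2_sym[OF U sR(2), of v u]
      part[OF bounded_linear_Re, of v u] part[OF bounded_linear_Re, of u v]
      part[OF bounded_linear_Im, of v u] part[OF bounded_linear_Im, of u v]
    by (simp add: complex_eq_iff)
qed

type_synonym 'n cv = "complex ^ 'n"

lemma wirt_dz_mult:
  fixes G H :: "complex ^ 'n \<Rightarrow> complex"
  assumes "G differentiable (at z)" "H differentiable (at z)"
  shows "wirt_dz (\<lambda>x. G x * H x) z a = wirt_dz G z a * H z + G z * wirt_dz H z a"
  unfolding wirt_dz_def D_mult[OF assms] by (simp add: field_simps)

lemma wirt_dzbar_mult:
  fixes G H :: "complex ^ 'n \<Rightarrow> complex"
  assumes "G differentiable (at z)" "H differentiable (at z)"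
  shows "wirt_dzbar (\<lambda>x. G x * H x) z a = wirt_dzbar G z a * H z + G z * wirt_dzbar H z a"
  unfolding wirt_dzbar_def D_mult[OF assms] by (simp add: field_simps)

lemma wirt_dz_add:
  fixes G H :: "complex ^ 'n \<Rightarrow> complex"
  assumes "G differentiable (at z)" "H differentiable (at z)"
  shows "wirt_dz (\<lambda>x. G x + H x) z a = wirt_dz G z a + wirt_dz H z a"
  unfolding wirt_dz_def D_add[OF assms] by (simp add: field_simps)

lemma wirt_dzbar_add:
  fixes G H :: "complex ^ 'n \<Rightarrow> complex"
  assumes "G differentiable (at z)" "H differentiable (at z)"
  shows "wirt_dzbar (\<lambda>x. G x + H x) z a = wirt_dzbar G z a + wirt_dzbar H z a"
  unfolding wirt_dzbar_def D_add[OF assms] by (simp add: field_simps)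

lemma wirt_dz_sum:
  fixes G :: "'i \<Rightarrow> complex ^ 'n \<Rightarrow> complex"
  assumes "finite S" "\<And>i. i \<in> S \<Longrightarrow> G i differentiable (at z)"
  shows "wirt_dz (\<lambda>x. \<Sum>i\<in>S. G i x) z a = (\<Sum>i\<in>S. wirt_dz (G i) z a)"
proof -
  have "(\<Sum>i\<in>S. (DD (G i) z (axis a 1) - \<i> * DD (G i) z (axis a \<i>)) / 2) =
     ((\<Sum>i\<in>S. DD (G i) z (axis a 1)) - \<i> * (\<Sum>i\<in>S. DD (G i) z (axis a \<i>))) / 2"
    by (simp add: sum_divide_distrib[symmetric] sum_subtractf sum_distrib_left)
  then show ?thesis unfolding wirt_dz_def by (simp add: D_sum[OF assms])
qed

lemma wirt_dzbar_sum:
  fixes G :: "'i \<Rightarrow> complex ^ 'n \<Rightarrow> complex"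
  assumes "finite S" "\<And>i. i \<in> S \<Longrightarrow> G i differentiable (at z)"
  shows "wirt_dzbar (\<lambda>x. \<Sum>i\<in>S. G i x) z a = (\<Sum>i\<in>S. wirt_dzbar (G i) z a)"
proof -
  have "(\<Sum>i\<in>S. (DD (G i) z (axis a 1) + \<i> * DD (G i) z (axis a \<i>)) / 2) =
     ((\<Sum>i\<in>S. DD (G i) z (axis a 1)) + \<i> * (\<Sum>i\<in>S. DD (G i) z (axis a \<i>))) / 2"
    by (simp add: sum_divide_distrib[symmetric] sum.distrib sum_distrib_left)
  then show ?thesis unfolding wirt_dzbar_def by (simp add: D_sum[OF assms])
qed

lemma wirt_dz_cnj:
  fixes G :: "complex ^ 'n \<Rightarrow> complex"
  assumes "G differentiable (at z)"
  shows "wirt_dz (\<lambda>x. cnj (G x)) z a = cnj (wirt_dzbar G z a)"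
  unfolding wirt_dz_def wirt_dzbar_def D_linear[OF assms bounded_linear_cnj] by simp

lemma wirt_dzbar_cnj:
  fixes G :: "complex ^ 'n \<Rightarrow> complex"
  assumes "G differentiable (at z)"
  shows "wirt_dzbar (\<lambda>x. cnj (G x)) z a = cnj (wirt_dz G z a)"
  unfolding wirt_dz_def wirt_dzbar_def D_linear[OF assms bounded_linear_cnj] by simp

lemma wirt_dz_const [simp]: "wirt_dz (\<lambda>x. c) z a = 0"
  unfolding wirt_dz_def by simp

lemma wirt_dzbar_const [simp]: "wirt_dzbar (\<lambda>x. c) z a = 0"
  unfolding wirt_dzbar_def by simp

lemma D_coord: "DD (\<lambda>w::complex^'n. w $ b) z v = v $ b"
proof -
  have "((\<lambda>w::complex^'n. w $ b) has_derivative (\<lambda>w. w $ b)) (at z)"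
    by (rule bounded_linear_imp_has_derivative) (rule bounded_linear_vec_nth)
  then show ?thesis by (metis frechet_derivative_at)
qed

lemma diff_coord [simp]: "(\<lambda>w::complex^'n. w $ b) differentiable (at z)"
  by (rule bounded_linear_imp_differentiable) (rule bounded_linear_vec_nth)

lemma wirt_dz_coord: "wirt_dz (\<lambda>w::complex^'n. w $ b) z a = (if a = b then 1 else 0)"
  unfolding wirt_dz_def D_coord by (simp add: axis_def)

lemma wirt_dzbar_coord: "wirt_dzbar (\<lambda>w::complex^'n. w $ b) z a = 0"
  unfolding wirt_dzbar_def D_coord by (simp add: axis_def)

lemma wirt_dz_local:
  fixes G H :: "complex ^ 'n \<Rightarrow> complex"
  assumes "G differentiable (at z)" "open U" "z \<in> U" "\<And>x. x \<in> U \<Longrightarrow> G x = H x"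
  shows "wirt_dz H z a = wirt_dz G z a"
  unfolding wirt_dz_def by (simp add: D_local[OF assms])

lemma wirt_dzbar_local:
  fixes G H :: "complex ^ 'n \<Rightarrow> complex"
  assumes "G differentiable (at z)" "open U" "z \<in> U" "\<And>x. x \<in> U \<Longrightarrow> G x = H x"
  shows "wirt_dzbar H z a = wirt_dzbar G z a"
  unfolding wirt_dzbar_def by (simp add: D_local[OF assms])

lemma wirt_dz_zero_local:
  fixes H :: "complex ^ 'n \<Rightarrow> complex"
  assumes "open U" "z \<in> U" "\<And>x. x \<in> U \<Longrightarrow> H x = c"
  shows "wirt_dz H z a = 0"
proof -
  have "wirt_dz H z a = wirt_dz (\<lambda>x. c) z a" by (rule wirt_dz_local) (use assms in auto)
  then show ?thesis by simp
qed

lemma wirt_dzbar_zero_local: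
  fixes H :: "complex ^ 'n \<Rightarrow> complex"
  assumes "open U" "z \<in> U" "\<And>x. x \<in> U \<Longrightarrow> H x = c"
  shows "wirt_dzbar H z a = 0"
proof -
  have "wirt_dzbar H z a = wirt_dzbar (\<lambda>x. c) z a" by (rule wirt_dzbar_local) (use assms in auto)
  then show ?thesis by simp
qed

lemma wirt_expand:
  fixes G :: "complex ^ 'n \<Rightarrow> complex"
  assumes U: "open U" "z \<in> U" and S: "smooth_on_set G U"
  shows "wirt_dz (\<lambda>w. wirt_dz G w a) z b =
     (DD (\<lambda>w. DD G w (axis a 1)) z (axis b 1) - \<i> * DD (\<lambda>w. DD G w (axis a 1)) z (axis b \<i>)
      - \<i> * DD (\<lambda>w. DD G w (axis a \<i>)) z (axis b 1) - DD (\<lambda>w. DD G w (axis a \<i>)) z (axis b \<i>)) / 4"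
    and "wirt_dzbar (\<lambda>w. wirt_dz G w a) z b =
     (DD (\<lambda>w. DD G w (axis a 1)) z (axis b 1) + \<i> * DD (\<lambda>w. DD G w (axis a 1)) z (axis b \<i>)
      - \<i> * DD (\<lambda>w. DD G w (axis a \<i>)) z (axis b 1) + DD (\<lambda>w. DD G w (axis a \<i>)) z (axis b \<i>)) / 4"
    and "wirt_dz (\<lambda>w. wirt_dzbar G w a) z b =
     (DD (\<lambda>w. DD G w (axis a 1)) z (axis b 1) - \<i> * DD (\<lambda>w. DD G w (axis a 1)) z (axis b \<i>)
      + \<i> * DD (\<lambda>w. DD G w (axis a \<i>)) z (axis b 1) + DD (\<lambda>w. DD G w (axis a \<i>)) z (axis b \<i>)) / 4"
proof -
  have d: "(\<lambda>w. DD G w v) differentiable (at z)" for v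
    using smooth_diff[OF smooth_D[OF S] U(2)] .
  have d2: "(\<lambda>w. c * DD G w v) differentiable (at z)" for v c
    using d by simp
  define F1 where "F1 = (\<lambda>w. (1/2) * DD G w (axis a 1) + (-\<i>/2) * DD G w (axis a \<i>))"
  define F2 where "F2 = (\<lambda>w. (1/2) * DD G w (axis a 1) + (\<i>/2) * DD G w (axis a \<i>))"
  have e1: "(\<lambda>w. wirt_dz G w a) = F1"
    by (simp add: F1_def wirt_dz_def fun_eq_iff field_simps)
  have e2: "(\<lambda>w. wirt_dzbar G w a) = F2"
    by (simp add: F2_def wirt_dzbar_def fun_eq_iff field_simps)
  have m: "DD (\<lambda>w. c * DD G w v) z t = c * DD (\<lambda>w. DD G w v) z t" for c v t
    using D_linear[OF d bounded_linear_mult_right] .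
  have f1: "DD F1 z t = (1/2) * DD (\<lambda>w. DD G w (axis a 1)) z t + (-\<i>/2) * DD (\<lambda>w. DD G w (axis a \<i>)) z t" for t
    unfolding F1_def D_add[OF d2 d2] m ..
  have f2: "DD F2 z t = (1/2) * DD (\<lambda>w. DD G w (axis a 1)) z t + (\<i>/2) * DD (\<lambda>w. DD G w (axis a \<i>)) z t" for t
    unfolding F2_def D_add[OF d2 d2] m ..
  have w1: "wirt_dz F z b = (DD F z (axis b 1) - \<i> * DD F z (axis b \<i>)) / 2" for F :: "complex^'n \<Rightarrow> complex"
    by (rule wirt_dz_def)
  have w2: "wirt_dzbar F z b = (DD F z (axis b 1) + \<i> * DD F z (axis b \<i>)) / 2" for F :: "complex^'n \<Rightarrow> complex"
    by (rule wirt_dzbar_def)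
  show "wirt_dz (\<lambda>w. wirt_dz G w a) z b =
     (DD (\<lambda>w. DD G w (axis a 1)) z (axis b 1) - \<i> * DD (\<lambda>w. DD G w (axis a 1)) z (axis b \<i>)
      - \<i> * DD (\<lambda>w. DD G w (axis a \<i>)) z (axis b 1) - DD (\<lambda>w. DD G w (axis a \<i>)) z (axis b \<i>)) / 4"
    unfolding e1 w1 f1 by (simp add: complex_eq_iff)
  show "wirt_dzbar (\<lambda>w. wirt_dz G w a) z b =
     (DD (\<lambda>w. DD G w (axis a 1)) z (axis b 1) + \<i> * DD (\<lambda>w. DD G w (axis a 1)) z (axis b \<i>)
      - \<i> * DD (\<lambda>w. DD G w (axis a \<i>)) z (axis b 1) + DD (\<lambda>w. DD G w (axis a \<i>)) z (axis b \<i>)) / 4"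
    unfolding e1 w2 f1 by (simp add: complex_eq_iff)
  show "wirt_dz (\<lambda>w. wirt_dzbar G w a) z b =
     (DD (\<lambda>w. DD G w (axis a 1)) z (axis b 1) - \<i> * DD (\<lambda>w. DD G w (axis a 1)) z (axis b \<i>)
      + \<i> * DD (\<lambda>w. DD G w (axis a \<i>)) z (axis b 1) + DD (\<lambda>w. DD G w (axis a \<i>)) z (axis b \<i>)) / 4"
    unfolding e2 w1 f2 by (simp add: complex_eq_iff)
qed

lemma wirt_comm:
  fixes G :: "complex ^ 'n \<Rightarrow> complex"
  assumes U: "open U" "z \<in> U" and S: "smooth_on_set G U"
  shows "wirt_dz (\<lambda>w. wirt_dz G w a) z b = wirt_dz (\<lambda>w. wirt_dz G w b) z a"
    and "wirt_dzbar (\<lambda>w. wirt_dz G w a) z b = wirt_dz (\<lambda>w. wirt_dzbar G w b) z a"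
proof -
  note s1 = D2_sym_complex[OF U S, of "axis a 1" "axis b 1"]
  note s2 = D2_sym_complex[OF U S, of "axis a 1" "axis b \<i>"]
  note s3 = D2_sym_complex[OF U S, of "axis a \<i>" "axis b 1"]
  note s4 = D2_sym_complex[OF U S, of "axis a \<i>" "axis b \<i>"]
  show "wirt_dz (\<lambda>w. wirt_dz G w a) z b = wirt_dz (\<lambda>w. wirt_dz G w b) z a"
    unfolding wirt_expand[OF U S] s1 s2 s3 s4 by (simp add: algebra_simps)
  show "wirt_dzbar (\<lambda>w. wirt_dz G w a) z b = wirt_dz (\<lambda>w. wirt_dzbar G w b) z a"
    unfolding wirt_expand[OF U S] s1 s2 s3 s4 by (simp add: algebra_simps)
qed

lemma final_alg:
  fixes N :: "'n::finite \<Rightarrow> 'n \<Rightarrow> complex" and e :: "'n \<Rightarrow> complex" and K :: real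
  assumes K: "K > 0" and Ns: "\<And>a b. N a b = N b a"
    and A: "\<And>b d. (\<Sum>a\<in>UNIV. N a b * cnj (N a d)) = (if b = d then of_real (K * (cmod (e b))\<^sup>2 - 1) else 0)"
    and B: "\<And>d. (\<Sum>a\<in>UNIV. N a d * cnj (e a)) = - e d"
  shows "(\<Sum>a\<in>UNIV. (cmod (e a))\<^sup>2) = 2 * real CARD('n) / K"
proof -
  define dd where "dd b = K * (cmod (e b))\<^sup>2 - 1" for b
  have A': "(\<Sum>a\<in>UNIV. N a b * cnj (N a d)) = (if b = d then of_real (dd b) else 0)" for b d
    using A unfolding dd_def by simp
  have C: "N b a * of_real (dd a) = of_real (dd b) * N b a" for a b
  proof -
    define T where "T = (\<Sum>c\<in>UNIV. \<Sum>k\<in>UNIV. N b c * cnj (N k c) * N k a)"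
    have "T = (\<Sum>c\<in>UNIV. N b c * (\<Sum>k\<in>UNIV. N k a * cnj (N k c)))"
      unfolding T_def by (simp add: sum_distrib_left mult_ac)
    also have "\<dots> = (\<Sum>c\<in>UNIV. N b c * (if a = c then of_real (dd a) else 0))"
      by (simp add: A')
    also have "\<dots> = N b a * of_real (dd a)"
      by (simp add: if_distrib cong: if_cong)
    finally have t1: "T = N b a * of_real (dd a)" .
    have "T = (\<Sum>k\<in>UNIV. (\<Sum>c\<in>UNIV. N c b * cnj (N c k)) * N k a)"
      unfolding T_def by (subst sum.swap) (simp add: sum_distrib_right Ns[of b] Ns[of k for k])
    also have "\<dots> = (\<Sum>k\<in>UNIV. (if b = k then of_real (dd b) else 0) * N k a)"
      by (simp add: A')
    also have "\<dots> = (\<Sum>k\<in>UNIV. if b = k then of_real (dd b) * N k a else 0)"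
      by (rule sum.cong) auto
    also have "\<dots> = of_real (dd b) * N b a"
      by (simp add: sum.delta)
    finally show ?thesis using t1 by simp
  qed
  define w where "w b = dd b - 1" for b
  have Cw: "N a b * of_real (w b) = of_real (w a) * N a b" for a b
    using C[of b a] Ns[of a b] unfolding w_def by (auto simp: algebra_simps)
  have eb: "e b = - (\<Sum>a\<in>UNIV. N a b * cnj (e a))" for b using B[of b] by simp
  have "(\<Sum>b\<in>UNIV. of_real (w b) * (e b * cnj (e b))) =
        (\<Sum>b\<in>UNIV. of_real (w b) * ((\<Sum>a\<in>UNIV. N a b * cnj (e a)) * (\<Sum>c\<in>UNIV. cnj (N c b) * e c)))"
    by (subst (1 2) eb) (simp add: cnj_sum)
  also have "\<dots> = (\<Sum>b\<in>UNIV. \<Sum>a\<in>UNIV. \<Sum>c\<in>UNIV. (N a b * of_real (w b)) * cnj (N c b) * cnj (e a) * e c)"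
    by (simp add: sum_distrib_left sum_distrib_right mult_ac)
  also have "\<dots> = (\<Sum>b\<in>UNIV. \<Sum>a\<in>UNIV. \<Sum>c\<in>UNIV. of_real (w a) * (N a b * cnj (N c b)) * cnj (e a) * e c)"
    by (simp add: Cw mult_ac)
  also have "\<dots> = (\<Sum>a\<in>UNIV. \<Sum>b\<in>UNIV. \<Sum>c\<in>UNIV. of_real (w a) * (N a b * cnj (N c b)) * cnj (e a) * e c)"
    by (rule sum.swap)
  also have "\<dots> = (\<Sum>a\<in>UNIV. \<Sum>c\<in>UNIV. \<Sum>b\<in>UNIV. of_real (w a) * (N a b * cnj (N c b)) * cnj (e a) * e c)"
    by (rule sum.cong[OF refl], rule sum.swap)
  also have "\<dots> = (\<Sum>a\<in>UNIV. \<Sum>c\<in>UNIV. of_real (w a) * (\<Sum>b\<in>UNIV. N a b * cnj (N c b)) * cnj (e a) * e c)"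
    by (simp add: sum_distrib_left sum_distrib_right)
  also have "\<dots> = (\<Sum>a\<in>UNIV. \<Sum>c\<in>UNIV. of_real (w a) * (\<Sum>b\<in>UNIV. N b a * cnj (N b c)) * cnj (e a) * e c)"
    using Ns by presburger
  also have "\<dots> = (\<Sum>a\<in>UNIV. \<Sum>c\<in>UNIV. of_real (w a) * (if a = c then of_real (dd a) else 0) * cnj (e a) * e c)"
    by (simp only: A')
  also have "\<dots> = (\<Sum>a\<in>UNIV. \<Sum>c\<in>UNIV. if a = c then of_real (w a) * of_real (dd a) * (cnj (e a) * e a) else 0)"
    by (intro sum.cong refl) auto
  also have "\<dots> = (\<Sum>a\<in>UNIV. of_real (w a) * of_real (dd a) * (cnj (e a) * e a))"
    by (simp add: sum.delta)
  finally have eq: "(\<Sum>b\<in>UNIV. of_real (w b) * (e b * cnj (e b))) =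
      (\<Sum>a\<in>UNIV. of_real (w a) * of_real (dd a) * (cnj (e a) * e a))" .
  have nrm: "e b * cnj (e b) = of_real ((cmod (e b))\<^sup>2)" for b
    by (rule complex_norm_square[symmetric])
  have "(\<Sum>b\<in>UNIV. w b * (cmod (e b))\<^sup>2) = (\<Sum>b\<in>UNIV. w b * dd b * (cmod (e b))\<^sup>2)"
  proof -
    have "of_real (\<Sum>b\<in>UNIV. w b * (cmod (e b))\<^sup>2) = (of_real (\<Sum>b\<in>UNIV. w b * dd b * (cmod (e b))\<^sup>2) :: complex)"
      using eq by (simp add: nrm mult.commute[of "cnj _"] mult_ac)
    then show ?thesis using of_real_eq_iff by blast
  qed
  then have "(\<Sum>b\<in>UNIV. (w b)\<^sup>2 * (cmod (e b))\<^sup>2) = 0"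
  proof -
    assume h: "(\<Sum>b\<in>UNIV. w b * (cmod (e b))\<^sup>2) = (\<Sum>b\<in>UNIV. w b * dd b * (cmod (e b))\<^sup>2)"
    have "(\<Sum>b\<in>UNIV. (w b)\<^sup>2 * (cmod (e b))\<^sup>2) = (\<Sum>b\<in>UNIV. w b * dd b * (cmod (e b))\<^sup>2 - w b * (cmod (e b))\<^sup>2)"
      by (rule sum.cong) (simp_all add: w_def power2_eq_square algebra_simps)
    also have "\<dots> = 0" using h by (simp add: sum_subtractf)
    finally show ?thesis .
  qed
  then have z: "(w b)\<^sup>2 * (cmod (e b))\<^sup>2 = 0" for b
    by (subst (asm) sum_nonneg_eq_0_iff) auto
  have ddnn: "dd b \<ge> 0" for b
  proof -
    have "of_real (dd b) = (\<Sum>a\<in>UNIV. N a b * cnj (N a b))" using A'[of b b] by simp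
    also have "\<dots> = of_real (\<Sum>a\<in>UNIV. (cmod (N a b))\<^sup>2)" by (simp add: complex_norm_square[symmetric])
    finally have "dd b = (\<Sum>a\<in>UNIV. (cmod (N a b))\<^sup>2)" using of_real_eq_iff by blast
    then show ?thesis by (simp add: sum_nonneg)
  qed
  have each: "(cmod (e b))\<^sup>2 = 2 / K" for b
  proof -
    have "K * (cmod (e b))\<^sup>2 \<ge> 1" using ddnn[of b] unfolding dd_def by simp
    then have "(cmod (e b))\<^sup>2 \<noteq> 0" by auto
    then have "w b = 0" using z[of b] by simp
    then show ?thesis using K unfolding w_def dd_def by (simp add: field_simps)
  qed
  show ?thesis by (simp add: each)
qed

lemma core_alg:
  fixes K :: real and r f :: "'n::finite \<Rightarrow> complex" and H :: "'n \<Rightarrow> 'n \<Rightarrow> complex"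
    and t :: "'n \<Rightarrow> real" and u p q g :: "'n \<Rightarrow> complex"
  assumes K: "K > 0"
    and t: "\<And>a. t a = 1 - (cmod (r a))\<^sup>2" and tpos: "\<And>a. t a > 0"
    and Hs: "\<And>a b. H a b = H b a"
    and u: "\<And>a. u a = of_real (K/2 * (t a)\<^sup>2)"
    and p: "\<And>a. p a = - of_real K * r a * of_real (t a)"
    and q: "\<And>a. q a = - of_real K * (1 - 2 * of_real ((cmod (r a))\<^sup>2))"
    and g: "\<And>a. g a * u a = 1"
    and Eq1: "\<And>d. p d * (f d * cnj (f d)) + cnj (f d) + (\<Sum>a\<in>UNIV. u a * f a * cnj (H a d)) = 0"
    and Eq2: "\<And>b d. (if b = d then q d * (f d * cnj (f d)) + g d else 0) + p d * H d b * cnj (f d)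
        + cnj (p b) * f b * cnj (H b d) + (\<Sum>a\<in>UNIV. u a * H a b * cnj (H a d)) = 0"
  shows "(\<Sum>a\<in>UNIV. (K/2 * (t a)\<^sup>2) * (cmod (f a))\<^sup>2) = 2 * real CARD('n) / K"
proof -
  define s where "s a = sqrt (K/2) * t a" for a
  have s2: "(s a)\<^sup>2 = K/2 * (t a)\<^sup>2" for a
    unfolding s_def using K by (simp add: power_mult_distrib)
  have spos: "s a > 0" for a unfolding s_def using K tpos by simp
  have uR: "u a = of_real ((s a)\<^sup>2)" for a by (simp only: u s2)
  have unz: "u a \<noteq> 0" for a using uR[of a] spos[of a] by simp
  have cu: "cnj (u a) = u a" for a unfolding uR by simp
  define c where "c a = 2 * cnj (r a) * f a / of_real (t a)" for a
  have rr: "r a * cnj (r a) = of_real ((cmod (r a))\<^sup>2)" for a by (rule complex_norm_square[symmetric])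
  have I1: "u a * c a = - cnj (p a) * f a" for a
    unfolding u c_def p using tpos[of a] by (simp add: field_simps power2_eq_square)
  have I1': "u a * cnj (c a) = - p a * cnj (f a)" for a
  proof -
    have "cnj (u a * c a) = cnj (- cnj (p a) * f a)" using I1 by simp
    then show ?thesis using cu by simp
  qed
  have pp: "p a * cnj (p a) = of_real (K\<^sup>2 * (cmod (r a))\<^sup>2 * (t a)\<^sup>2)" for a
  proof -
    have "p a * cnj (p a) = of_real ((cmod (p a))\<^sup>2)" by (rule complex_norm_square[symmetric])
    also have "cmod (p a) = K * cmod (r a) * t a"
      unfolding p using K tpos[of a] by (simp add: norm_mult)
    finally show ?thesis by (simp add: power_mult_distrib)
  qed
  have I3: "q a * u a - p a * cnj (p a) = - of_real K * u a" for a
    unfolding pp q u t by (simp add: field_simps power2_eq_square)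
  define Hh where "Hh a b = H a b - (if a = b then c a else 0)" for a b
  have Hhs: "Hh a b = Hh b a" for a b unfolding Hh_def using Hs by auto
  have A1: "(\<Sum>a\<in>UNIV. u a * H a b * cnj (H a d)) =
     (\<Sum>a\<in>UNIV. u a * Hh a b * cnj (Hh a d)) + u b * c b * cnj (Hh b d) + u d * Hh d b * cnj (c d)
     + (if b = d then u b * c b * cnj (c b) else 0)" for b d
  proof -
    have pt: "u a * H a b * cnj (H a d) = u a * Hh a b * cnj (Hh a d)
       + (if a = b then u a * c a * cnj (Hh a d) else 0) + (if a = d then u a * Hh a b * cnj (c a) else 0)
       + (if a = b \<and> a = d then u a * c a * cnj (c a) else 0)" for a
      unfolding Hh_def by (cases "a = b"; cases "a = d") (auto simp: algebra_simps)
    have "(\<Sum>a\<in>UNIV. u a * H a b * cnj (H a d)) =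
      (\<Sum>a\<in>UNIV. u a * Hh a b * cnj (Hh a d)) + (\<Sum>a\<in>UNIV. if a = b then u a * c a * cnj (Hh a d) else 0)
      + (\<Sum>a\<in>UNIV. if a = d then u a * Hh a b * cnj (c a) else 0)
      + (\<Sum>a\<in>UNIV. if a = b \<and> a = d then u a * c a * cnj (c a) else 0)"
      unfolding pt by (simp add: sum.distrib)
    also have "(\<Sum>a\<in>UNIV. if a = b \<and> a = d then u a * c a * cnj (c a) else 0) = (if b = d then u b * c b * cnj (c b) else 0)"
    proof (cases "b = d")
      case True then show ?thesis by (simp add: sum.delta)
    next
      case False then show ?thesis by (auto intro!: sum.neutral)
    qed
    finally show ?thesis by (simp add: sum.delta)
  qed
  have bracket: "q b * (f b * cnj (f b)) + g b + cnj (p b) * f b * cnj (c b) + p b * cnj (f b) * c b + u b * c b * cnj (c b)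
      = g b - of_real K * (f b * cnj (f b))" for b
  proof -
    have "u b * (cnj (p b) * f b * cnj (c b) + p b * cnj (f b) * c b + u b * c b * cnj (c b))
       = cnj (p b) * f b * (u b * cnj (c b)) + p b * cnj (f b) * (u b * c b) + (u b * c b) * (u b * cnj (c b))"
      by (simp add: algebra_simps)
    also have "\<dots> = - (p b * cnj (p b)) * (f b * cnj (f b))"
      unfolding I1 I1' by (simp add: algebra_simps)
    finally have h1: "u b * (cnj (p b) * f b * cnj (c b) + p b * cnj (f b) * c b + u b * c b * cnj (c b))
       = - (p b * cnj (p b)) * (f b * cnj (f b))" .
    have "u b * (q b * (f b * cnj (f b)) + g b + cnj (p b) * f b * cnj (c b) + p b * cnj (f b) * c b + u b * c b * cnj (c b))
        = (q b * u b) * (f b * cnj (f b)) + g b * u b + u b * (cnj (p b) * f b * cnj (c b) + p b * cnj (f b) * c b + u b * c b * cnj (c b))"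
      by (simp add: algebra_simps)
    also have "\<dots> = (q b * u b) * (f b * cnj (f b)) + g b * u b - (p b * cnj (p b)) * (f b * cnj (f b))"
      unfolding h1 by simp
    also have "\<dots> = (q b * u b - p b * cnj (p b)) * (f b * cnj (f b)) + g b * u b"
      by (simp add: algebra_simps)
    also have "\<dots> = u b * (g b - of_real K * (f b * cnj (f b)))"
      unfolding I3 by (simp add: algebra_simps)
    finally show ?thesis using unz[of b] by simp
  qed
  have A2: "(\<Sum>a\<in>UNIV. u a * Hh a b * cnj (Hh a d)) = (if b = d then of_real K * (f b * cnj (f b)) - g b else 0)" for b d
  proof -
    have e2: "(if b = d then q d * (f d * cnj (f d)) + g d else 0) + p d * H d b * cnj (f d)
        + cnj (p b) * f b * cnj (H b d) + (\<Sum>a\<in>UNIV. u a * H a b * cnj (H a d)) = 0" by (rule Eq2)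
    have x1: "u b * c b * cnj (Hh b d) = - cnj (p b) * f b * cnj (H b d) + (if b = d then cnj (p b) * f b * cnj (c b) else 0)"
      unfolding Hh_def using I1[of b] by (auto simp: algebra_simps)
    have x2: "u d * Hh d b * cnj (c d) = - p d * cnj (f d) * H d b + (if b = d then p d * cnj (f d) * c d else 0)"
    proof -
      have "u d * Hh d b * cnj (c d) = (u d * cnj (c d)) * Hh d b" by (simp add: mult_ac)
      also have "\<dots> = - p d * cnj (f d) * Hh d b" by (simp add: I1')
      finally show ?thesis unfolding Hh_def by (auto simp: algebra_simps)
    qed
    show ?thesis
    proof (cases "b = d")
      case True
      have e3: "(q b * (f b * cnj (f b)) + g b + cnj (p b) * f b * cnj (c b) + p b * cnj (f b) * c b + u b * c b * cnj (c b)) + (\<Sum>a\<in>UNIV. u a * Hh a b * cnj (Hh a d)) = 0"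
        using e2 True unfolding A1 x1 x2 by (simp add: algebra_simps)
      then show ?thesis unfolding bracket using True by (simp add: algebra_simps eq_neg_iff_add_eq_0)
    next
      case False
      then show ?thesis using e2 unfolding A1 x1 x2 by (simp add: algebra_simps)
    qed
  qed
  have B1: "cnj (f d) + (\<Sum>a\<in>UNIV. u a * f a * cnj (Hh a d)) = 0" for d
  proof -
    have pt: "u a * f a * cnj (H a d) = u a * f a * cnj (Hh a d) + (if a = d then u a * f a * cnj (c a) else 0)" for a
      unfolding Hh_def by (auto simp: algebra_simps)
    have "(\<Sum>a\<in>UNIV. u a * f a * cnj (H a d)) = (\<Sum>a\<in>UNIV. u a * f a * cnj (Hh a d)) + u d * f d * cnj (c d)"
      unfolding pt by (simp add: sum.distrib sum.delta)
    also have "u d * f d * cnj (c d) = - p d * (f d * cnj (f d))" using I1'[of d] by (simp add: algebra_simps)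
    finally show ?thesis using Eq1[of d] by (simp add: algebra_simps)
  qed
  define N where "N a b = of_real (s a * s b) * Hh a b" for a b
  define e where "e a = of_real (s a) * f a" for a
  have Ns: "N a b = N b a" for a b unfolding N_def using Hhs by (simp add: mult.commute)
  have A: "(\<Sum>a\<in>UNIV. N a b * cnj (N a d)) = (if b = d then of_real (K * (cmod (e b))\<^sup>2 - 1) else 0)" for b d
  proof -
    have "(\<Sum>a\<in>UNIV. N a b * cnj (N a d)) = of_real (s b * s d) * (\<Sum>a\<in>UNIV. u a * Hh a b * cnj (Hh a d))"
      unfolding N_def uR by (simp add: sum_distrib_left power2_eq_square mult_ac)
    also have "\<dots> = (if b = d then of_real (K * (cmod (e b))\<^sup>2 - 1) else 0)"
    proof (cases "b = d")
      case True
      have gb: "of_real ((s b)\<^sup>2) * g b = 1" using g[of b] uR[of b] by (simp add: mult.commute)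
      have "of_real (s b * s b) * (of_real K * (f b * cnj (f b)) - g b) = of_real K * (of_real (s b) * f b * cnj (of_real (s b) * f b)) - of_real ((s b)\<^sup>2) * g b"
        by (simp add: algebra_simps power2_eq_square)
      also have "\<dots> = of_real K * (e b * cnj (e b)) - 1"
        unfolding gb e_def by simp
      also have "\<dots> = of_real (K * (cmod (e b))\<^sup>2 - 1)"
        by (simp only: complex_norm_square[symmetric] of_real_diff of_real_mult of_real_1)
      finally show ?thesis using True A2[of b d] by simp
    next
      case False
      then show ?thesis using A2[of b d] by simp
    qed
    finally show ?thesis .
  qed
  have B: "(\<Sum>a\<in>UNIV. N a d * cnj (e a)) = - e d" for d
  proof -
    have "cnj (cnj (f d) + (\<Sum>a\<in>UNIV. u a * f a * cnj (Hh a d))) = 0" using B1[of d] by simp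
    then have h: "f d + (\<Sum>a\<in>UNIV. u a * cnj (f a) * Hh a d) = 0" using cu by (simp add: cnj_sum)
    have "(\<Sum>a\<in>UNIV. N a d * cnj (e a)) = of_real (s d) * (\<Sum>a\<in>UNIV. u a * cnj (f a) * Hh a d)"
      unfolding N_def e_def uR by (simp add: sum_distrib_left power2_eq_square mult_ac)
    also have "\<dots> = - e d" using h unfolding e_def by (simp add: eq_neg_iff_add_eq_0[symmetric])
    finally show ?thesis .
  qed
  have fin: "(\<Sum>a\<in>UNIV. (cmod (e a))\<^sup>2) = 2 * real CARD('n) / K"
    by (rule final_alg[OF K Ns A B])
  have eqs: "(K/2 * (t a)\<^sup>2) * (cmod (f a))\<^sup>2 = (cmod (e a))\<^sup>2" for a
    unfolding e_def using spos[of a] s2[of a] by (simp add: norm_mult power_mult_distrib)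
  show ?thesis using fin by (simp only: eqs)
qed

lemma D_diff:
  assumes "G differentiable (at z)" "H differentiable (at z)"
  shows "DD (\<lambda>x. G x - H x) z v = DD G z v - DD H z v"
proof -
  have h: "((\<lambda>x. G x - H x) has_derivative (\<lambda>h. DD G z h - DD H z h)) (at z)"
    by (rule has_derivative_diff) (use assms frechet_derivative_works in blast)+
  have "(\<lambda>h. DD G z h - DD H z h) = frechet_derivative (\<lambda>x. G x - H x) (at z)"
    by (rule frechet_derivative_at[OF h])
  from fun_cong[OF this, of v] show ?thesis by simp
qed

lemma ar1: "((a::complex) - b - \<i> * (c - d)) / 2 = (a - \<i> * c) / 2 - (b - \<i> * d) / 2"
  by (simp add: diff_divide_distrib right_diff_distrib)
lemma ar2: "((a::complex) - b + \<i> * (c - d)) / 2 = (a + \<i> * c) / 2 - (b + \<i> * d) / 2"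
  by (simp add: diff_divide_distrib add_divide_distrib right_diff_distrib)

lemma wirt_dz_diff:
  fixes G H :: "complex ^ 'n \<Rightarrow> complex"
  assumes "G differentiable (at z)" "H differentiable (at z)"
  shows "wirt_dz (\<lambda>x. G x - H x) z a = wirt_dz G z a - wirt_dz H z a"
  unfolding wirt_dz_def D_diff[OF assms] by (rule ar1)

lemma wirt_dzbar_diff:
  fixes G H :: "complex ^ 'n \<Rightarrow> complex"
  assumes "G differentiable (at z)" "H differentiable (at z)"
  shows "wirt_dzbar (\<lambda>x. G x - H x) z a = wirt_dzbar G z a - wirt_dzbar H z a"
  unfolding wirt_dzbar_def D_diff[OF assms] by (rule ar2)

lemma diff_coord_cnj [simp]: "(\<lambda>w::complex^'n. cnj (w $ b)) differentiable (at z)"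
  by (simp add: differentiable_cnj_iff)

lemma wirt_dz_coord_cnj: "wirt_dz (\<lambda>w::complex^'n. cnj (w $ b)) z a = 0"
  by (simp add: wirt_dz_cnj wirt_dzbar_coord)

lemma wirt_dzbar_coord_cnj: "wirt_dzbar (\<lambda>w::complex^'n. cnj (w $ b)) z a = (if a = b then 1 else 0)"
  by (simp add: wirt_dzbar_cnj wirt_dz_coord)

lemmas wirt_rules = wirt_dz_mult wirt_dzbar_mult wirt_dz_diff wirt_dzbar_diff wirt_dz_add wirt_dzbar_add
  wirt_dz_coord wirt_dzbar_coord wirt_dz_coord_cnj wirt_dzbar_coord_cnj

lemma uc_derivs:
  fixes K :: real and w :: "complex ^ 'n"
  shows "wirt_dz (\<lambda>w::complex^'n. of_real (K/2) * ((1 - w$a * cnj (w$a)) * (1 - w$a * cnj (w$a)))) w b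
      = (if a = b then - of_real K * cnj (w$a) * (1 - w$a * cnj (w$a)) else 0)"
    and "wirt_dzbar (\<lambda>w::complex^'n. of_real (K/2) * ((1 - w$a * cnj (w$a)) * (1 - w$a * cnj (w$a)))) w b
      = (if a = b then - of_real K * w$a * (1 - w$a * cnj (w$a)) else 0)"
    and "wirt_dz (\<lambda>w::complex^'n. - of_real K * w$a * (1 - w$a * cnj (w$a))) w b
      = (if a = b then - of_real K * (1 - 2 * (w$a * cnj (w$a))) else 0)"
  by (simp only: wirt_rules wirt_dz_const wirt_dzbar_const differentiable_mult differentiable_diff
        differentiable_const diff_coord diff_coord_cnj; simp add: algebra_simps)+

theorem proposition3p1:
  fixes K :: real and \<phi> :: "complex ^ 'n \<Rightarrow> real" and U :: "(complex ^ 'n) set"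
  assumes "K > 0"
    and "local_potential K \<phi> U"
    and "\<exists>c. \<forall>z\<in>U. grad_len_sq K \<phi> z = c"
  shows "\<forall>z\<in>U. grad_len_sq K \<phi> z = 2 * real CARD('n) / K"
proof
  fix z assume zU: "z \<in> U"
  have K: "K > 0" using assms(1) .
  have oU: "open U" and subU: "U \<subseteq> polydisc" and s\<phi>: "smooth_on_set \<phi> U"
    and LP: "\<And>w a b. w \<in> U \<Longrightarrow> wirt_dzbar (\<lambda>w. wirt_dz (\<lambda>u. complex_of_real (\<phi> u)) w a) w b
              = complex_of_real (pd_metric K w a b)"
    using assms(2) unfolding local_potential_def by auto
  obtain c where cc: "\<And>w. w \<in> U \<Longrightarrow> grad_len_sq K \<phi> w = c" using assms(3) by blast
  define \<Phi> where "\<Phi> = (\<lambda>u. complex_of_real (\<phi> u))"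
  have s\<Phi>: "smooth_on_set \<Phi> U" unfolding \<Phi>_def by (rule smooth_linear[OF oU bounded_linear_of_real s\<phi>])
  define f where "f a = (\<lambda>w. wirt_dz \<Phi> w a)" for a
  have sf: "smooth_on_set (f a) U" for a unfolding f_def by (rule smooth_wirt_dz[OF oU s\<Phi>])
  define Hf where "Hf a d = (\<lambda>w. wirt_dz (f a) w d)" for a d
  have sH: "smooth_on_set (Hf a d) U" for a d unfolding Hf_def by (rule smooth_wirt_dz[OF oU sf])
  have df: "f a differentiable (at w)" if "w \<in> U" for a w using smooth_diff[OF sf that] .
  have dfc: "(\<lambda>x. cnj (f a x)) differentiable (at w)" if "w \<in> U" for a w
    using df[OF that] by (simp add: differentiable_cnj_iff)
  have dH: "Hf a d differentiable (at w)" if "w \<in> U" for a d w using smooth_diff[OF sH that] .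
  have dHc: "(\<lambda>x. cnj (Hf a d x)) differentiable (at w)" if "w \<in> U" for a d w
    using dH[OF that] by (simp add: differentiable_cnj_iff)
  define Uc where "Uc a = (\<lambda>w::complex^'n. of_real (K/2) * ((1 - w$a * cnj (w$a)) * (1 - w$a * cnj (w$a))))" for a
  define P where "P a = (\<lambda>w::complex^'n. - of_real K * w$a * (1 - w$a * cnj (w$a)))" for a
  define Q where "Q a = (\<lambda>w::complex^'n. - of_real K * (1 - 2 * (w$a * cnj (w$a))))" for a
  have dUc: "Uc a differentiable (at w)" for a w unfolding Uc_def by simp
  have dP: "P a differentiable (at w)" for a w unfolding P_def by simp
  have WUc: "wirt_dz (Uc a) w b = (if a = b then cnj (P a w) else 0)" for a b w
    unfolding Uc_def P_def using uc_derivs(1)[of K a w b] by (simp add: algebra_simps)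
  have WbUc: "wirt_dzbar (Uc a) w b = (if a = b then P a w else 0)" for a b w
    unfolding Uc_def P_def using uc_derivs(2)[of K a w b] by simp
  have WP: "wirt_dz (P a) w b = (if a = b then Q a w else 0)" for a b w
    unfolding Q_def P_def using uc_derivs(3)[of K a w b] by simp
  define tt where "tt a w = 1 - (cmod (w$a))\<^sup>2" for a and w :: "complex^'n"
  have ttpos: "tt a w > 0" if "w \<in> U" for a w
  proof -
    have "cmod (w $ a) < 1" using subU that unfolding polydisc_def by auto
    then have "(cmod (w $ a))\<^sup>2 < 1" by (simp add: power_less_one_iff abs_less_iff)
    then show ?thesis unfolding tt_def by simp
  qed
  have rr: "w$a * cnj (w$a) = of_real ((cmod (w$a))\<^sup>2)" for a and w :: "complex^'n"
    by (rule complex_norm_square[symmetric])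
  have rr': "1 - w$a * cnj (w$a) = of_real (tt a w)" for a and w :: "complex^'n"
    unfolding rr tt_def by simp
  have UcR: "Uc a w = of_real (K/2 * (tt a w)\<^sup>2)" for a w
    unfolding Uc_def rr' by (simp add: power2_eq_square)
  have cUc: "cnj (Uc a w) = Uc a w" for a w by (simp add: UcR)
  have pdv: "pd_metric K w a b = (if a = b then 2 / (K * (tt a w)\<^sup>2) else 0)" for a b w
    unfolding pd_metric_def tt_def by simp
  have Wbf: "wirt_dzbar (f a) w b = of_real (pd_metric K w a b)" if "w \<in> U" for a b w
    using LP[OF that, of a b] unfolding f_def \<Phi>_def .
  have G1: "Uc a w * wirt_dzbar (f a) w b = (if a = b then 1 else 0)" if "w \<in> U" for a b w
    unfolding Wbf[OF that] UcR pdv using ttpos[OF that, of a] K by (cases "a = b") (simp_all add: field_simps)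
  have grad: "complex_of_real (grad_len_sq K \<phi> w) = (\<Sum>a\<in>UNIV. Uc a w * (f a w * cnj (f a w)))" for w
  proof -
    have t: "complex_of_real ((cmod (f a w))\<^sup>2 / pd_metric K w a a) = Uc a w * (f a w * cnj (f a w))" for a
    proof -
      have "(cmod (f a w))\<^sup>2 / pd_metric K w a a = (K/2 * (tt a w)\<^sup>2) * (cmod (f a w))\<^sup>2"
        unfolding pdv by simp
      then show ?thesis unfolding UcR by (simp only: of_real_mult complex_norm_square)
    qed
    show ?thesis unfolding grad_len_sq_def of_real_sum
      using t unfolding f_def \<Phi>_def by simp
  qed
  define Fc where "Fc = (\<lambda>w. \<Sum>a\<in>UNIV. Uc a w * (f a w * cnj (f a w)))"
  have Fconst: "Fc w = of_real c" if "w \<in> U" for w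
    unfolding Fc_def using grad[of w] cc[OF that] by simp
  define E1 where "E1 d = (\<lambda>w. P d w * (f d w * cnj (f d w)) + cnj (f d w)
       + (\<Sum>a\<in>UNIV. Uc a w * f a w * cnj (Hf a d w)))" for d
  have E1z: "E1 d w = 0" if wU: "w \<in> U" for d w
  proof -
    have "wirt_dzbar Fc w d = 0" by (rule wirt_dzbar_zero_local[OF oU wU Fconst])
    moreover have "wirt_dzbar Fc w d = E1 d w"
    proof -
      have dprod: "(\<lambda>x. f a x * cnj (f a x)) differentiable (at w)" for a
        using df[OF wU] dfc[OF wU] by simp
      have s1: "wirt_dzbar Fc w d = (\<Sum>a\<in>UNIV. wirt_dzbar (\<lambda>x. Uc a x * (f a x * cnj (f a x))) w d)"
        unfolding Fc_def by (rule wirt_dzbar_sum) (use dUc dprod in simp_all)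
      have s2: "wirt_dzbar (\<lambda>x. Uc a x * (f a x * cnj (f a x))) w d =
          (if a = d then P a w * (f a w * cnj (f a w)) + cnj (f a w) else 0) + Uc a w * f a w * cnj (Hf a d w)" for a
      proof -
        have "wirt_dzbar (\<lambda>x. Uc a x * (f a x * cnj (f a x))) w d
            = wirt_dzbar (Uc a) w d * (f a w * cnj (f a w)) + Uc a w * wirt_dzbar (\<lambda>x. f a x * cnj (f a x)) w d"
          by (rule wirt_dzbar_mult[OF dUc dprod])
        also have "wirt_dzbar (\<lambda>x. f a x * cnj (f a x)) w d
            = wirt_dzbar (f a) w d * cnj (f a w) + f a w * wirt_dzbar (\<lambda>x. cnj (f a x)) w d"
          by (rule wirt_dzbar_mult[OF df[OF wU] dfc[OF wU]])
        also have "wirt_dzbar (\<lambda>x. cnj (f a x)) w d = cnj (Hf a d w)"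
          unfolding Hf_def by (rule wirt_dzbar_cnj[OF df[OF wU]])
        finally have "wirt_dzbar (\<lambda>x. Uc a x * (f a x * cnj (f a x))) w d
            = wirt_dzbar (Uc a) w d * (f a w * cnj (f a w)) + (Uc a w * wirt_dzbar (f a) w d) * cnj (f a w)
              + Uc a w * f a w * cnj (Hf a d w)"
          by (simp add: algebra_simps)
        then show ?thesis unfolding WbUc G1[OF wU] by auto
      qed
      show ?thesis unfolding s1 s2 E1_def by (simp add: sum.distrib sum.delta)
    qed
    ultimately show ?thesis by simp
  qed
  define fz where "fz a = f a z" for a
  define Hz where "Hz a b = Hf a b z" for a b
  define uz where "uz a = Uc a z" for a
  define pz where "pz a = P a z" for a
  define qz where "qz a = Q a z" for a
  define gz where "gz a b = wirt_dzbar (f a) z b" for a b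
  define gd where "gd a = gz a a" for a
  define X where "X a b d = wirt_dz (\<lambda>w. wirt_dzbar (f a) w b) z d" for a b d
  have gzv: "gz a b = (if a = b then gd a else 0)" for a b
    unfolding gd_def gz_def Wbf[OF zU] pdv by simp
  have cgz: "cnj (gz a b) = gz a b" for a b
    unfolding gz_def Wbf[OF zU] by simp
  have gdu: "gd a * uz a = 1" for a
    using G1[OF zU, of a a] unfolding gd_def gz_def uz_def by (simp add: mult.commute)
  have R: "uz a * X a b d = - ((if a = d then cnj (pz a) else 0) * gz a b)" for a b d
  proof -
    have dW: "(\<lambda>w. wirt_dzbar (f a) w b) differentiable (at z)"
      by (rule smooth_diff[OF smooth_wirt_dzbar[OF oU sf] zU])
    have "wirt_dz (\<lambda>w. Uc a w * wirt_dzbar (f a) w b) z d = 0"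
      by (rule wirt_dz_zero_local[OF oU zU G1])
    moreover have "wirt_dz (\<lambda>w. Uc a w * wirt_dzbar (f a) w b) z d
        = wirt_dz (Uc a) z d * gz a b + uz a * X a b d"
      unfolding gz_def uz_def X_def by (rule wirt_dz_mult[OF dUc dW])
    ultimately have h: "(if a = d then cnj (pz a) else 0) * gz a b + uz a * X a b d = 0"
      unfolding WUc pz_def by simp
    then show ?thesis by (metis add.commute eq_neg_iff_add_eq_0)
  qed
  have Hsym: "Hz a b = Hz b a" for a b
    unfolding Hz_def Hf_def f_def by (rule wirt_comm(1)[OF oU zU s\<Phi>])
  have WbH: "wirt_dzbar (Hf a d) z b = X a b d" for a b d
    unfolding Hf_def X_def by (rule wirt_comm(2)[OF oU zU sf])
  have Eq2: "(if b = d then qz d * (fz d * cnj (fz d)) + gd d else 0) + pz d * Hz d b * cnj (fz d)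
        + cnj (pz b) * fz b * cnj (Hz b d) + (\<Sum>a\<in>UNIV. uz a * Hz a b * cnj (Hz a d)) = 0" for b d
  proof -
    have dprod: "(\<lambda>x. f d x * cnj (f d x)) differentiable (at z)"
      using df[OF zU] dfc[OF zU] by simp
    have dA: "(\<lambda>x. P d x * (f d x * cnj (f d x))) differentiable (at z)"
      using dP dprod by simp
    have dT: "(\<lambda>x. Uc a x * f a x * cnj (Hf a d x)) differentiable (at z)" for a
      using dUc df[OF zU] dHc[OF zU] by simp
    have dS: "(\<lambda>x. \<Sum>a\<in>UNIV. Uc a x * f a x * cnj (Hf a d x)) differentiable (at z)"
      using dT by simp
    have dAB: "(\<lambda>x. P d x * (f d x * cnj (f d x)) + cnj (f d x)) differentiable (at z)"
      using dA dfc[OF zU] by simp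
    have "wirt_dz (E1 d) z b = 0" by (rule wirt_dz_zero_local[OF oU zU E1z])
    moreover have "wirt_dz (E1 d) z b =
        wirt_dz (\<lambda>x. P d x * (f d x * cnj (f d x))) z b + wirt_dz (\<lambda>x. cnj (f d x)) z b
        + (\<Sum>a\<in>UNIV. wirt_dz (\<lambda>x. Uc a x * f a x * cnj (Hf a d x)) z b)"
      unfolding E1_def wirt_dz_add[OF dAB dS] wirt_dz_add[OF dA dfc[OF zU]]
      using wirt_dz_sum[of UNIV "\<lambda>a x. Uc a x * f a x * cnj (Hf a d x)" z b] dT by simp
    moreover have "wirt_dz (\<lambda>x. P d x * (f d x * cnj (f d x))) z b
        = (if d = b then qz d else 0) * (fz d * cnj (fz d)) + pz d * (Hz d b * cnj (fz d) + fz d * cnj (gz d b))"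
    proof -
      have "wirt_dz (\<lambda>x. P d x * (f d x * cnj (f d x))) z b
          = wirt_dz (P d) z b * (f d z * cnj (f d z)) + P d z * wirt_dz (\<lambda>x. f d x * cnj (f d x)) z b"
        by (rule wirt_dz_mult[OF dP dprod])
      also have "wirt_dz (\<lambda>x. f d x * cnj (f d x)) z b = wirt_dz (f d) z b * cnj (f d z) + f d z * wirt_dz (\<lambda>x. cnj (f d x)) z b"
        by (rule wirt_dz_mult[OF df[OF zU] dfc[OF zU]])
      also have "wirt_dz (\<lambda>x. cnj (f d x)) z b = cnj (gz d b)"
        unfolding gz_def by (rule wirt_dz_cnj[OF df[OF zU]])
      finally show ?thesis unfolding WP fz_def Hz_def Hf_def qz_def pz_def by simp
    qed
    moreover have "wirt_dz (\<lambda>x. cnj (f d x)) z b = cnj (gz d b)"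
      unfolding gz_def by (rule wirt_dz_cnj[OF df[OF zU]])
    moreover have "wirt_dz (\<lambda>x. Uc a x * f a x * cnj (Hf a d x)) z b
        = ((if a = b then cnj (pz a) else 0) * fz a + uz a * Hz a b) * cnj (Hz a d) + fz a * cnj (uz a * X a b d)" for a
    proof -
      have dUf: "(\<lambda>x. Uc a x * f a x) differentiable (at z)" using dUc df[OF zU] by simp
      have "wirt_dz (\<lambda>x. Uc a x * f a x * cnj (Hf a d x)) z b
          = wirt_dz (\<lambda>x. Uc a x * f a x) z b * cnj (Hf a d z) + (Uc a z * f a z) * wirt_dz (\<lambda>x. cnj (Hf a d x)) z b"
        by (rule wirt_dz_mult[OF dUf dHc[OF zU]])
      also have "wirt_dz (\<lambda>x. Uc a x * f a x) z b = wirt_dz (Uc a) z b * f a z + Uc a z * wirt_dz (f a) z b"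
        by (rule wirt_dz_mult[OF dUc df[OF zU]])
      also have "wirt_dz (\<lambda>x. cnj (Hf a d x)) z b = cnj (X a b d)"
        unfolding WbH[symmetric] by (rule wirt_dz_cnj[OF dH[OF zU]])
      finally show ?thesis unfolding WUc fz_def Hz_def Hf_def uz_def pz_def
        by (simp add: cUc mult_ac)
    qed
    ultimately have raw: "(if d = b then qz d else 0) * (fz d * cnj (fz d)) + pz d * (Hz d b * cnj (fz d) + fz d * cnj (gz d b))
        + cnj (gz d b) + (\<Sum>a\<in>UNIV. ((if a = b then cnj (pz a) else 0) * fz a + uz a * Hz a b) * cnj (Hz a d)
            + fz a * cnj (uz a * X a b d)) = 0"
      by simp
    have sum1: "(\<Sum>a\<in>UNIV. ((if a = b then cnj (pz a) else 0) * fz a + uz a * Hz a b) * cnj (Hz a d)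
            + fz a * cnj (uz a * X a b d))
        = cnj (pz b) * fz b * cnj (Hz b d) + (\<Sum>a\<in>UNIV. uz a * Hz a b * cnj (Hz a d)) - fz d * pz d * cnj (gz d b)"
    proof -
      have pt: "((if a = b then cnj (pz a) else 0) * fz a + uz a * Hz a b) * cnj (Hz a d) + fz a * cnj (uz a * X a b d)
          = (if a = b then cnj (pz a) * fz a * cnj (Hz a d) else 0) + uz a * Hz a b * cnj (Hz a d)
            - (if a = d then fz a * pz a * cnj (gz a b) else 0)" for a
        unfolding R by (auto simp: algebra_simps)
      show ?thesis unfolding pt by (simp add: sum.distrib sum_subtractf sum.delta cgz gzv)
    qed
    have cg: "cnj (gz d b) = (if b = d then gd d else 0)" using cgz[of d b] gzv[of d b] by auto
    show ?thesis using raw unfolding sum1 cg by (auto simp: algebra_simps)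
  qed
  have Eq1: "pz d * (fz d * cnj (fz d)) + cnj (fz d) + (\<Sum>a\<in>UNIV. uz a * fz a * cnj (Hz a d)) = 0" for d
    using E1z[OF zU, of d] unfolding E1_def pz_def fz_def uz_def Hz_def by simp
  have core: "(\<Sum>a\<in>UNIV. (K/2 * (tt a z)\<^sup>2) * (cmod (fz a))\<^sup>2) = 2 * real CARD('n) / K"
  proof (rule core_alg[where r="\<lambda>a. z $ a" and H=Hz and u=uz and p=pz and q=qz and g=gd])
    show "K > 0" by (rule K)
    show "\<And>a. tt a z = 1 - (cmod (z $ a))\<^sup>2" unfolding tt_def ..
    show "\<And>a. tt a z > 0" using ttpos[OF zU] .
    show "\<And>a b. Hz a b = Hz b a" by (rule Hsym)
    show "\<And>a. uz a = of_real (K / 2 * (tt a z)\<^sup>2)" unfolding uz_def UcR ..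
    show "\<And>a. pz a = - of_real K * z $ a * of_real (tt a z)" unfolding pz_def P_def rr' ..
    show "\<And>a. qz a = - of_real K * (1 - 2 * of_real ((cmod (z $ a))\<^sup>2))" unfolding qz_def Q_def rr ..
    show "\<And>a. gd a * uz a = 1" by (rule gdu)
    show "\<And>d. pz d * (fz d * cnj (fz d)) + cnj (fz d) + (\<Sum>a\<in>UNIV. uz a * fz a * cnj (Hz a d)) = 0"
      by (rule Eq1)
    show "\<And>b d. (if b = d then qz d * (fz d * cnj (fz d)) + gd d else 0) + pz d * Hz d b * cnj (fz d)
        + cnj (pz b) * fz b * cnj (Hz b d) + (\<Sum>a\<in>UNIV. uz a * Hz a b * cnj (Hz a d)) = 0"
      by (rule Eq2)
  qed
  have "complex_of_real (grad_len_sq K \<phi> z) = complex_of_real (\<Sum>a\<in>UNIV. (K/2 * (tt a z)\<^sup>2) * (cmod (fz a))\<^sup>2)"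
    unfolding grad of_real_sum of_real_mult UcR fz_def complex_norm_square ..
  then show "grad_len_sq K \<phi> z = 2 * real CARD('n) / K" using core of_real_eq_iff by metis
qed

end
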